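(* Let $m$, $E$ and the chaos notation be as in the context, let $f\in L^2_{\mathbb{R}}(\mathcal{H},\mathcal{B},m)$ and let $k$ be a positive integer such that the $k$-linear form $\mathcal{B}_{f_k}$ is bounded. Then the series $\sum_{(i_1,\dots,i_k)\in(\mathbb{Z}^* )^k}|\alpha^{(k)}_{i_1,\dots,i_k}|^2\sigma_{i_1}^2\cdots\sigma_{i_{k-1}}^2$ converges and $$\sum_{(i_1,\dots,i_k)\in(\mathbb{Z}^* )^k}\big|\alpha^{(k)}_{i_1,\dots,i_k}\big|^2\sigma_{i_1}^2\cdots\sigma_{i_{k-1}}^2\le\|\mathcal{B}_{f_k}\|^2\,\|E\|_2^{2(k-1)}.$$
   Context: $\mathcal{H}$ complex separable infinite-dimensional Hilbert space (inner product linear in second variable). $T$ bounded with a $\mu$-spanning $\mathbb{T}$-eigenvector field $E$ (bounded $E:\mathbb{T}\to\mathcal{H}$, $TE(\lambda)=\lambda E(\lambda)$, dense span of $\{E(\lambda):\lambda\in A\}$ whenever $\mu(A)=1$, $\mu$ normalized Lebesgue measure on the unit circle $\mathbb{T}$); $\|E\|_2^2=\int\|E(\lambda)\|^2d\mu$. $R$: $\langle Rx,y\rangle=\int\langle x,E(\lambda)\rangle\overline{\langle y,E(\lambda)\rangle}d\mu$; $m$ the Gaussian measure with covariance $R$. $(e_j)_{j\ge1}$ orthonormal eigenbasis of $R$, $Re_j=2\sigma_j^2e_j$; $\mathbb{Z}^*=\mathbb{Z}\setminus\{0\}$, $\mathfrak{e}_\ell=e_\ell$, $\mathfrak{e}_{-\ell}=ie_\ell$,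 $\sigma_{-\ell}=\sigma_\ell$. $L^2_{\mathbb{R}}$ real-valued part of $L^2(m)$; $\mathcal{G}$ closed span of $\mathfrak{Re}\langle\mathfrak{e}_k,\cdot\rangle$; $\mathcal{G}^k$ span of $k$-fold products; $:h:=h-P_kh$, $P_k$ projection onto closed span of $\mathcal{G}^0,\dots,\mathcal{G}^{k-1}$; $:\mathcal{G}^k:$ closure of Wick transforms; $f_k$ projection of $f$ onto $:\mathcal{G}^k:$. $\alpha^{(k)}_{i_1,\dots,i_k}=\langle f,:\mathfrak{Re}\langle\mathfrak{e}_{i_1},\cdot\rangle\cdots\mathfrak{Re}\langle\mathfrak{e}_{i_k},\cdot\rangle:\rangle_{L^2(m)}/(k!\sigma_{i_1}^2\cdots\sigma_{i_k}^2)$ (the symmetric coefficients with $f_k=\sum_{(\mathbb{Z}^* )^k}\alpha^{(k)}_{i_1,\dots,i_k}:\mathfrak{Re}\langle\mathfrak{e}_{i_1},\cdot\rangle\cdots\mathfrak{Re}\langle\mathfrak{e}_{i_k},\cdot\rangle:$), and $\mathcal{B}_{f_k}(x^{(1)},\dots,x^{(k)})=\sum_{(\mathbb{Z}^* )^k}\alpha^{(k)}_{i_1,\dots,i_k}x^{(1)}_{i_1}\cdots x^{(k)}_{i_k}$ on $\ell_2(\mathbb{Z}^*,\mathbb{R})^k$; bounded means well defined with $|\mathcal{B}_{f_k}(x^{(1)},\dots)|\le C\prod\|x^{(j)}\|_2$, $\|\mathcal{B}_{f_k}\|$ the sup over unit vectors. *)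

theory Defs
  imports "HOL-Probability.Probability"
begin

section \<open>The Hilbert space: a concrete model of a complex separable infinite-dimensional Hilbert space\<close>

type_synonym hvec = "nat \<Rightarrow> complex"

definition l2H :: "hvec set" where
  "l2H = {x. summable (\<lambda>n. (cmod (x n))\<^sup>2)}"

definition hinner :: "hvec \<Rightarrow> hvec \<Rightarrow> complex" where
  "hinner x y = (\<Sum>n. cnj (x n) * y n)"

definition hnorm :: "hvec \<Rightarrow> real" where
  "hnorm x = sqrt (\<Sum>n. (cmod (x n))\<^sup>2)"

definition hscale :: "complex \<Rightarrow> hvec \<Rightarrow> hvec" where
  "hscale c x = (\<lambda>n. c * x n)"

definition bounded_op :: "(hvec \<Rightarrow> hvec) \<Rightarrow> bool" where
  "bounded_op T \<longleftrightarrow>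
     (\<forall>x\<in>l2H. T x \<in> l2H) \<and>
     (\<forall>x\<in>l2H. \<forall>y\<in>l2H. \<forall>a b. T (\<lambda>n. a * x n + b * y n) = (\<lambda>n. a * T x n + b * T y n)) \<and>
     (\<exists>C. \<forall>x\<in>l2H. hnorm (T x) \<le> C * hnorm x)"

definition circle_measure :: "complex measure" where
  "circle_measure =
     distr (uniform_measure lborel {0..<2*pi}) (restrict_space borel (sphere (0::complex) 1)) cis"

definition spanning_field :: "(hvec \<Rightarrow> hvec) \<Rightarrow> (complex \<Rightarrow> hvec) \<Rightarrow> bool" where
  "spanning_field T E \<longleftrightarrow>
     (\<forall>l\<in>sphere 0 1. E l \<in> l2H \<and> T (E l) = hscale l (E l)) \<and>
     (\<exists>M. \<forall>l\<in>sphere 0 1. hnorm (E l) \<le> M) \<and>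
     (\<forall>x\<in>l2H. (\<lambda>l. hinner x (E l)) \<in> borel_measurable circle_measure) \<and>
     (\<forall>A\<in>sets circle_measure. measure circle_measure A = 1 \<longrightarrow>
        (\<forall>x\<in>l2H. \<forall>\<epsilon>>0. \<exists>F c. finite F \<and> F \<subseteq> A \<and>
            hnorm (\<lambda>n. x n - (\<Sum>l\<in>F. c l * E l n)) < \<epsilon>))"

definition E_L2norm_sq :: "(complex \<Rightarrow> hvec) \<Rightarrow> real" where
  "E_L2norm_sq E = (\<integral>l. (hnorm (E l))\<^sup>2 \<partial>circle_measure)"

definition is_R_of :: "(complex \<Rightarrow> hvec) \<Rightarrow> (hvec \<Rightarrow> hvec) \<Rightarrow> bool" where
  "is_R_of E R \<longleftrightarrow> (\<forall>x\<in>l2H. R x \<in> l2H) \<and>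
     (\<forall>x\<in>l2H. \<forall>y\<in>l2H. hinner (R x) y =
        (\<integral>l. hinner x (E l) * cnj (hinner y (E l)) \<partial>circle_measure))"

definition is_eigenbasis :: "(hvec \<Rightarrow> hvec) \<Rightarrow> (nat \<Rightarrow> hvec) \<Rightarrow> (nat \<Rightarrow> real) \<Rightarrow> bool" where
  "is_eigenbasis R e \<sigma> \<longleftrightarrow>
     (\<forall>j\<ge>1. e j \<in> l2H) \<and>
     (\<forall>j\<ge>1. \<forall>l\<ge>1. hinner (e j) (e l) = (if j = l then 1 else 0)) \<and>
     (\<forall>x\<in>l2H. (\<forall>j\<ge>1. hinner (e j) x = 0) \<longrightarrow> x = (\<lambda>_. 0)) \<and>
     (\<forall>j\<ge>1. R (e j) = hscale (complex_of_real (2 * (\<sigma> j)\<^sup>2)) (e j))"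

definition frake :: "(nat \<Rightarrow> hvec) \<Rightarrow> int \<Rightarrow> hvec" where
  "frake e l = (if l > 0 then e (nat l) else hscale \<i> (e (nat (- l))))"

definition sigZ :: "(nat \<Rightarrow> real) \<Rightarrow> int \<Rightarrow> real" where
  "sigZ \<sigma> l = \<sigma> (nat \<bar>l\<bar>)"

definition H_sets :: "hvec set set" where
  "H_sets = sigma_sets l2H {{x \<in> l2H. x n \<in> U} | n U. U \<in> sets (borel :: complex measure)}"

text \<open>Centered (complex symmetric) Gaussian measure with covariance R:
  \<open>\<integral> exp(i Re\<langle>x,z\<rangle>) dm(z) = exp(-\<langle>Rx,x\<rangle>/4)\<close>, i.e. \<open>\<integral>|\<langle>x,z\<rangle>|^2 dm = \<langle>Rx,x\<rangle>\<close>.\<close>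
definition gaussian_cov :: "hvec measure \<Rightarrow> (hvec \<Rightarrow> hvec) \<Rightarrow> bool" where
  "gaussian_cov m R \<longleftrightarrow> prob_space m \<and> space m = l2H \<and> sets m = H_sets \<and>
     (\<forall>x\<in>l2H. (\<integral>z. exp (\<i> * complex_of_real (Re (hinner x z))) \<partial>m)
                = complex_of_real (exp (- Re (hinner (R x) x) / 4)))"

definition L2R :: "hvec measure \<Rightarrow> (hvec \<Rightarrow> real) set" where
  "L2R m = {h. h \<in> borel_measurable m \<and> integrable m (\<lambda>z. (h z)\<^sup>2)}"

definition L2_closure :: "hvec measure \<Rightarrow> (hvec \<Rightarrow> real) set \<Rightarrow> (hvec \<Rightarrow> real) set" where
  "L2_closure m S = {h \<in> L2R m. \<forall>\<epsilon>>0. \<exists>v\<in>S. (\<integral>z. (h z - v z)\<^sup>2 \<partial>m) < \<epsilon>}"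

definition lin_span :: "(hvec \<Rightarrow> real) set \<Rightarrow> (hvec \<Rightarrow> real) set" where
  "lin_span S = {(\<lambda>z. \<Sum>i<n. c i * g i z) | (n::nat) (c::nat \<Rightarrow> real) g. \<forall>i<n. g i \<in> S}"

definition rfun :: "(nat \<Rightarrow> hvec) \<Rightarrow> int \<Rightarrow> hvec \<Rightarrow> real" where
  "rfun e l z = Re (hinner (frake e l) z)"

definition Gspace :: "hvec measure \<Rightarrow> (nat \<Rightarrow> hvec) \<Rightarrow> (hvec \<Rightarrow> real) set" where
  "Gspace m e = L2_closure m (lin_span {rfun e l | l. l \<noteq> 0})"

definition Gpow :: "hvec measure \<Rightarrow> (nat \<Rightarrow> hvec) \<Rightarrow> nat \<Rightarrow> (hvec \<Rightarrow> real) set" where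
  "Gpow m e j = lin_span {(\<lambda>z. \<Prod>i<j. g i z) | g. \<forall>i<j. g i \<in> Gspace m e}"

definition Vlow :: "hvec measure \<Rightarrow> (nat \<Rightarrow> hvec) \<Rightarrow> nat \<Rightarrow> (hvec \<Rightarrow> real) set" where
  "Vlow m e k = L2_closure m (lin_span (\<Union>j<k. Gpow m e j))"

text \<open>\<open>g = :h: = h - P_k h\<close>: characterised by \<open>h - g \<in> V\<close> and \<open>g \<perp> V\<close> (orthogonal projection).\<close>
definition is_wick :: "hvec measure \<Rightarrow> (nat \<Rightarrow> hvec) \<Rightarrow> nat \<Rightarrow> (hvec \<Rightarrow> real) \<Rightarrow> (hvec \<Rightarrow> real) \<Rightarrow> bool" where
  "is_wick m e k h g \<longleftrightarrow> g \<in> L2R m \<and> (\<lambda>z. h z - g z) \<in> Vlow m e k \<and>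
     (\<forall>v\<in>Vlow m e k. (\<integral>z. g z * v z \<partial>m) = 0)"

definition wick :: "hvec measure \<Rightarrow> (nat \<Rightarrow> hvec) \<Rightarrow> nat \<Rightarrow> (hvec \<Rightarrow> real) \<Rightarrow> (hvec \<Rightarrow> real)" where
  "wick m e k h = (SOME g. is_wick m e k h g)"

definition alpha :: "hvec measure \<Rightarrow> (nat \<Rightarrow> hvec) \<Rightarrow> (nat \<Rightarrow> real) \<Rightarrow> (hvec \<Rightarrow> real) \<Rightarrow> nat \<Rightarrow> int list \<Rightarrow> real" where
  "alpha m e \<sigma> f k is =
     (\<integral>z. f z * wick m e k (\<lambda>w. \<Prod>j<k. rfun e (is ! j) w) z \<partial>m)
       / (fact k * (\<Prod>j<k. (sigZ \<sigma> (is ! j))\<^sup>2))"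

definition Zstar_tuples :: "nat \<Rightarrow> int list set" where
  "Zstar_tuples k = {is. length is = k \<and> 0 \<notin> set is}"

text \<open>Finitely supported real sequences indexed by \<open>\<int>*\<close>.\<close>
definition fsv :: "(int \<Rightarrow> real) set" where
  "fsv = {x. x 0 = 0 \<and> finite {i. x i \<noteq> 0}}"

definition l2norm :: "(int \<Rightarrow> real) \<Rightarrow> real" where
  "l2norm x = sqrt (\<Sum>i\<in>{i. x i \<noteq> 0}. (x i)\<^sup>2)"

definition Bform :: "(int list \<Rightarrow> real) \<Rightarrow> nat \<Rightarrow> (nat \<Rightarrow> int \<Rightarrow> real) \<Rightarrow> real" where
  "Bform a k xs = (\<Sum>is\<in>{is. length is = k \<and> (\<forall>j<k. xs j (is ! j) \<noteq> 0)}.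
                      a is * (\<Prod>j<k. xs j (is ! j)))"

definition Bbounded :: "(int list \<Rightarrow> real) \<Rightarrow> nat \<Rightarrow> bool" where
  "Bbounded a k \<longleftrightarrow> (\<exists>C. \<forall>xs. (\<forall>j<k. xs j \<in> fsv) \<longrightarrow>
                         \<bar>Bform a k xs\<bar> \<le> C * (\<Prod>j<k. l2norm (xs j)))"

definition Bnorm :: "(int list \<Rightarrow> real) \<Rightarrow> nat \<Rightarrow> real" where
  "Bnorm a k = Sup {\<bar>Bform a k xs\<bar> | xs. \<forall>j<k. xs j \<in> fsv \<and> l2norm (xs j) = 1}"

end

theory Submission imports Defs begin
lemma sum_lists_prod:
  fixes g :: "'a \<Rightarrow> real"
  assumes "finite S"
  shows "(\<Sum>p\<in>{p. set p \<subseteq> S \<and> length p = n}. \<Prod>j<n. g (p!j)) = (\<Sum>i\<in>S. g i)^n"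
proof (induction n)
  case 0
  have "{p. set p \<subseteq> S \<and> length p = 0} = {[]}" by auto
  then show ?case by simp
next
  case (Suc n)
  have inj: "inj_on (\<lambda>(xs, n). n#xs) ({xs. set xs \<subseteq> S \<and> length xs = n} \<times> S)"
    by (auto simp: inj_on_def)
  have "(\<Sum>p\<in>{p. set p \<subseteq> S \<and> length p = Suc n}. \<Prod>j<Suc n. g (p!j))
     = (\<Sum>q\<in>{xs. set xs \<subseteq> S \<and> length xs = n} \<times> S. \<Prod>j<Suc n. g ((snd q # fst q)!j))"
    unfolding lists_length_Suc_eq by (subst sum.reindex[OF inj]) (auto intro!: sum.cong simp: case_prod_beta)
  also have "\<dots> = (\<Sum>q\<in>{xs. set xs \<subseteq> S \<and> length xs = n} \<times> S. (\<Prod>j<n. g (fst q!j)) * g (snd q))"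
    by (intro sum.cong refl) (simp add: prod.lessThan_Suc_shift mult.commute del: prod.lessThan_Suc)
  also have "\<dots> = (\<Sum>p\<in>{xs. set xs \<subseteq> S \<and> length xs = n}. \<Prod>j<n. g (p!j)) * (\<Sum>i\<in>S. g i)"
    by (simp add: sum_product sum.cartesian_product case_prod_beta)
  finally show ?case using Suc by simp
qed

lemma main_abstract:
  fixes a :: "int list \<Rightarrow> real" and s :: "int \<Rightarrow> real"
  assumes row: "\<And>p S. length p = n \<Longrightarrow> 0 \<notin> set p \<Longrightarrow> finite S \<Longrightarrow> 0 \<notin> S \<Longrightarrow> (\<Sum>i\<in>S. (a (p@[i]))\<^sup>2) \<le> B"
    and tr: "\<And>S. finite S \<Longrightarrow> 0 \<notin> S \<Longrightarrow> (\<Sum>i\<in>S. s i) \<le> T"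
    and spos: "\<And>i. s i \<ge> 0"
    and A: "A = {is. length is = Suc n \<and> 0 \<notin> set is}"
  shows "(\<lambda>is. (a is)\<^sup>2 * (\<Prod>j<n. s (is!j))) summable_on A
     \<and> (\<Sum>\<^sub>\<infinity>is\<in>A. (a is)\<^sup>2 * (\<Prod>j<n. s (is!j))) \<le> B * T^n"
proof -
  define f where "f = (\<lambda>is. (a is)\<^sup>2 * (\<Prod>j<n. s (is!j)))"
  have fnn: "f x \<ge> 0" for x unfolding f_def by (intro mult_nonneg_nonneg prod_nonneg) (auto simp: spos)
  have T0: "T \<ge> 0" using tr[of "{}"] by simp
  have Bnn: "B \<ge> 0" if "length p = n" "0 \<notin> set p" for p :: "int list" using row[OF that, of "{}"] by simp
  have B0: "B \<ge> 0" by (rule Bnn[of "replicate n 1"]) auto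
  have fin: "sum f F \<le> B * T^n" if F: "finite F" "F \<subseteq> A" for F
  proof -
    define S where "S = \<Union> (set ` F)"
    have Sfin: "finite S" using F by (simp add: S_def)
    have S0: "0 \<notin> S" using F A by (auto simp: S_def)
    define L where "L = {xs. set xs \<subseteq> S \<and> length xs = n}"
    have Lfin: "finite L" unfolding L_def using finite_lists_length_eq[OF Sfin] by simp
    have FL: "F \<subseteq> (\<lambda>(p,i). p @ [i]) ` (L \<times> S)"
    proof
      fix x assume x: "x \<in> F"
      then have "length x = Suc n" using F A by auto
      then obtain p i where "x = p @ [i]" "length p = n"
        by (metis append_butlast_last_id length_butlast diff_Suc_1 list.size(3) nat.distinct(1))
      then show "x \<in> (\<lambda>(p,i). p @ [i]) ` (L \<times> S)" using x
        by (auto simp: L_def S_def intro!: image_eqI[of _ _ "(p,i)"])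
    qed
    have inj: "inj_on (\<lambda>(p,i). p @ [i]) (L \<times> S)" by (auto simp: inj_on_def)
    have "sum f F \<le> sum f ((\<lambda>(p,i). p @ [i]) ` (L \<times> S))"
      by (intro sum_mono2 FL fnn) (use Lfin Sfin in auto)
    also have "\<dots> = (\<Sum>q\<in>L \<times> S. f (fst q @ [snd q]))"
      by (subst sum.reindex[OF inj]) (simp add: case_prod_beta)
    also have "\<dots> = (\<Sum>p\<in>L. (\<Prod>j<n. s (p!j)) * (\<Sum>i\<in>S. (a (p@[i]))\<^sup>2))"
    proof -
      have e: "f (p @ [i]) = (\<Prod>j<n. s (p!j)) * (a (p@[i]))\<^sup>2" if "p \<in> L" for p i
        using that by (auto simp: f_def L_def nth_append mult.commute intro!: prod.cong)
      have "(\<Sum>p\<in>L. (\<Prod>j<n. s (p!j)) * (\<Sum>i\<in>S. (a (p@[i]))\<^sup>2))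
          = (\<Sum>q\<in>L \<times> S. (\<Prod>j<n. s (fst q!j)) * (a (fst q@[snd q]))\<^sup>2)"
        by (simp add: sum.cartesian_product case_prod_beta sum_distrib_left)
      then show ?thesis using e by (auto intro!: sum.cong)
    qed
    also have "\<dots> \<le> (\<Sum>p\<in>L. (\<Prod>j<n. s (p!j)) * B)"
    proof (intro sum_mono mult_left_mono prod_nonneg)
      fix p assume "p \<in> L"
      then have "length p = n" "0 \<notin> set p" using S0 by (auto simp: L_def)
      then show "(\<Sum>i\<in>S. (a (p@[i]))\<^sup>2) \<le> B" using row Sfin S0 by blast
    qed (auto simp: spos)
    also have "\<dots> = B * (\<Sum>i\<in>S. s i)^n"
      by (simp add: sum_distrib_left[symmetric] sum_distrib_right[symmetric] L_def sum_lists_prod[OF Sfin] mult.commute)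
    also have "\<dots> \<le> B * T^n"
      using B0 by (intro mult_left_mono power_mono tr Sfin S0 sum_nonneg spos) auto
    finally show ?thesis .
  qed
  have bdd: "bdd_above (sum f ` {F. F\<subseteq>A \<and> finite F})"
    using fin by (intro bdd_aboveI2[where M="B * T^n"]) auto
  have sm: "f summable_on A" by (rule nonneg_bdd_above_summable_on[OF fnn bdd])
  moreover have "infsum f A \<le> B * T^n" by (rule infsum_le_finite_sums[OF sm fin])
  ultimately show ?thesis unfolding f_def by simp
qed
lemma row_bound:
  assumes bb: "Bbounded a (Suc n)" and p: "length p = n" "0 \<notin> set p"
    and S: "finite S" "0 \<notin> S"
  shows "(\<Sum>i\<in>S. (a (p@[i]))\<^sup>2) \<le> (Bnorm a (Suc n))\<^sup>2"
proof (cases "(\<Sum>i\<in>S. (a (p@[i]))\<^sup>2) = 0")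
  case True
  then show ?thesis by simp
next
  case False
  define A where "A = (\<Sum>i\<in>S. (a (p@[i]))\<^sup>2)"
  have Apos: "A > 0" using False A_def by (metis less_eq_real_def sum_nonneg zero_le_power2)
  define v where "v = (\<lambda>i. if i \<in> S then a (p@[i]) / sqrt A else 0)"
  define ind where "ind = (\<lambda>j i. if i = p!j then (1::real) else 0)"
  define xs where "xs = (\<lambda>j. if j < n then ind j else v)"
  define S' where "S' = {i\<in>S. a (p@[i]) \<noteq> 0}"
  have S'fin: "finite S'" using S by (simp add: S'_def)
  have vsupp: "{i. v i \<noteq> 0} = S'" using Apos by (auto simp: v_def S'_def)
  have indsupp: "{i. ind j i \<noteq> 0} = {p!j}" for j by (auto simp: ind_def)
  have AS': "A = (\<Sum>i\<in>S'. (a (p@[i]))\<^sup>2)" unfolding A_def S'_def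
    by (rule sum.mono_neutral_right) (use S in auto)
  have fsv: "xs j \<in> fsv" if "j < Suc n" for j
  proof (cases "j < n")
    case True
    then have "p!j \<noteq> 0" using p by (metis nth_mem)
    then show ?thesis using True by (auto simp: xs_def fsv_def ind_def)
  next
    case False
    then show ?thesis using S S'fin vsupp by (auto simp: xs_def fsv_def v_def)
  qed
  have l2v: "l2norm v = 1"
  proof -
    have "(\<Sum>i\<in>S'. (v i)\<^sup>2) = (\<Sum>i\<in>S'. (a (p@[i]))\<^sup>2 / A)"
      using Apos by (intro sum.cong) (auto simp: v_def S'_def power_divide)
    also have "\<dots> = 1" using Apos AS' by (simp add: sum_divide_distrib[symmetric])
    finally show ?thesis by (simp add: l2norm_def vsupp)
  qed
  have l2: "l2norm (xs j) = 1" for j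
    using l2v by (auto simp: xs_def l2norm_def indsupp ind_def)
  have I: "{is. length is = Suc n \<and> (\<forall>j<Suc n. xs j (is ! j) \<noteq> 0)} = (\<lambda>i. p@[i]) ` S'"
  proof safe
    fix "is" assume len: "length is = Suc n" and nz: "\<forall>j<Suc n. xs j (is ! j) \<noteq> 0"
    have "is = p @ [is!n]"
    proof (rule nth_equalityI)
      show "length is = length (p @ [is!n])" using len p by simp
      fix j assume "j < length is"
      then show "is!j = (p @ [is!n])!j"
        using nz[rule_format, of j] len p by (cases "j < n") (auto simp: xs_def ind_def nth_append less_Suc_eq split: if_splits)
    qed
    moreover have "is!n \<in> S'" using nz[rule_format, of n] vsupp by (auto simp: xs_def)
    ultimately show "is \<in> (\<lambda>i. p@[i]) ` S'" by blast
  next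
    fix i assume "i \<in> S'"
    then show "length (p@[i]) = Suc n" using p by simp
    fix j assume "j < Suc n" "xs j ((p @ [i]) ! j) = 0"
    then show False using \<open>i \<in> S'\<close> vsupp p
      by (cases "j < n") (auto simp: xs_def ind_def nth_append)
  qed
  have "Bform a (Suc n) xs = (\<Sum>i\<in>S'. a (p@[i]) * (\<Prod>j<Suc n. xs j ((p@[i]) ! j)))"
    unfolding Bform_def I by (subst sum.reindex) (auto simp: inj_on_def)
  also have "\<dots> = (\<Sum>i\<in>S'. a (p@[i]) * v i)"
    using p by (intro sum.cong refl) (simp add: xs_def ind_def nth_append)
  also have "\<dots> = (\<Sum>i\<in>S'. (a (p@[i]))\<^sup>2 / sqrt A)"
    by (intro sum.cong refl) (auto simp: v_def S'_def power2_eq_square)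
  also have "\<dots> = sqrt A"
    using Apos AS' by (simp add: sum_divide_distrib[symmetric] real_div_sqrt)
  finally have Bf: "Bform a (Suc n) xs = sqrt A" .
  obtain C where C: "\<And>xs. (\<forall>j<Suc n. xs j \<in> fsv) \<Longrightarrow> \<bar>Bform a (Suc n) xs\<bar> \<le> C * (\<Prod>j<Suc n. l2norm (xs j))"
    using bb unfolding Bbounded_def by blast
  have bdd: "bdd_above {\<bar>Bform a (Suc n) xs\<bar> | xs. \<forall>j<Suc n. xs j \<in> fsv \<and> l2norm (xs j) = 1}"
  proof (rule bdd_aboveI[where M=C], clarify)
    fix ys assume h: "\<forall>j<Suc n. ys j \<in> fsv \<and> l2norm (ys j) = 1"
    then have "(\<Prod>j<Suc n. l2norm (ys j)) = 1" by (intro prod.neutral) auto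
    then show "\<bar>Bform a (Suc n) ys\<bar> \<le> C" using C[of ys] h by simp
  qed
  have "sqrt A \<le> Bnorm a (Suc n)"
    unfolding Bnorm_def using fsv l2 Bf Apos
    by (intro cSup_upper[OF _ bdd]) (auto intro!: exI[of _ xs])
  then have "(sqrt A)\<^sup>2 \<le> (Bnorm a (Suc n))\<^sup>2" using Apos by (intro power_mono) auto
  then show ?thesis using Apos by (simp add: A_def)
qed
lemma l2_prod_summable:
  assumes "a \<in> l2H" "b \<in> l2H"
  shows "summable (\<lambda>n. cnj (a n) * b n)"
proof (rule summable_comparison_test)
  show "summable (\<lambda>n. (cmod (a n))\<^sup>2 + (cmod (b n))\<^sup>2)"
    using assms by (intro summable_add) (auto simp: l2H_def)
  show "\<exists>N. \<forall>n\<ge>N. norm (cnj (a n) * b n) \<le> (cmod (a n))\<^sup>2 + (cmod (b n))\<^sup>2"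
  proof (intro exI allI impI)
    fix n
    have "cmod (a n) * cmod (b n) \<le> (cmod (a n))\<^sup>2 + (cmod (b n))\<^sup>2"
      using sum_squares_bound[of "cmod (a n)" "cmod (b n)"] mult_nonneg_nonneg[OF norm_ge_zero norm_ge_zero, of "a n" "b n"] by linarith
    then show "norm (cnj (a n) * b n) \<le> (cmod (a n))\<^sup>2 + (cmod (b n))\<^sup>2"
      by (simp add: norm_mult)
  qed
qed

lemma hnorm_sq: "x \<in> l2H \<Longrightarrow> (hnorm x)\<^sup>2 = (\<Sum>n. (cmod (x n))\<^sup>2)"
  unfolding hnorm_def l2H_def by (simp add: suminf_nonneg)

lemma cnj_self: "cnj z * z = complex_of_real ((cmod z)\<^sup>2)"
  by (metis complex_norm_square mult.commute)

lemma self_cnj: "z * cnj z = complex_of_real ((cmod z)\<^sup>2)"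
  by (metis complex_norm_square)

lemma bessel:
  assumes x: "x \<in> l2H" and J: "finite J" and eJ: "\<And>j. j \<in> J \<Longrightarrow> e j \<in> l2H"
    and orth: "\<And>i j. i \<in> J \<Longrightarrow> j \<in> J \<Longrightarrow> hinner (e j) (e i) = (if j = i then 1 else 0)"
  shows "(\<Sum>j\<in>J. (cmod (hinner (e j) x))\<^sup>2) \<le> (hnorm x)\<^sup>2"
proof -
  define c where "c j = hinner (e j) x" for j
  define y where "y n = x n - (\<Sum>j\<in>J. c j * e j n)" for n
  define P where "P j M = (\<Sum>n<M. cnj (e j n) * x n)" for j M
  define G where "G j i M = (\<Sum>n<M. cnj (e j n) * e i n)" for j i M
  define A where "A M = (\<Sum>n<M. cnj (x n) * x n)" for M
  have pt: "cnj (y n) * y n = cnj (x n) * x n - (\<Sum>j\<in>J. c j * cnj (cnj (e j n) * x n))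
      - (\<Sum>j\<in>J. cnj (c j) * (cnj (e j n) * x n))
      + (\<Sum>j\<in>J. \<Sum>i\<in>J. cnj (c j) * c i * (cnj (e j n) * e i n))" for n
  proof -
    define s where "s = (\<Sum>j\<in>J. c j * e j n)"
    have 1: "cnj (y n) * y n = cnj (x n) * x n - cnj (x n) * s - cnj s * x n + cnj s * s"
      unfolding y_def s_def[symmetric] by (simp add: algebra_simps)
    have 2: "cnj (x n) * s = (\<Sum>j\<in>J. c j * cnj (cnj (e j n) * x n))"
      unfolding s_def sum_distrib_left by (intro sum.cong refl) (simp add: ac_simps)
    have 3: "cnj s * x n = (\<Sum>j\<in>J. cnj (c j) * (cnj (e j n) * x n))"
      unfolding s_def cnj_sum sum_distrib_right by (intro sum.cong refl) (simp add: ac_simps)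
    have 4: "cnj s * s = (\<Sum>j\<in>J. \<Sum>i\<in>J. cnj (c j) * c i * (cnj (e j n) * e i n))"
      unfolding s_def cnj_sum sum_product by (intro sum.cong refl) (simp add: ac_simps)
    show ?thesis unfolding 1 2 3 4 ..
  qed
  have Qeq: "(\<Sum>n<M. cnj (y n) * y n) = A M - (\<Sum>j\<in>J. c j * cnj (P j M))
      - (\<Sum>j\<in>J. cnj (c j) * P j M) + (\<Sum>j\<in>J. \<Sum>i\<in>J. cnj (c j) * c i * G j i M)" for M
  proof -
    have a: "(\<Sum>n<M. \<Sum>j\<in>J. c j * cnj (cnj (e j n) * x n)) = (\<Sum>j\<in>J. c j * cnj (P j M))"
      unfolding P_def cnj_sum sum_distrib_left by (rule sum.swap)
    have b: "(\<Sum>n<M. \<Sum>j\<in>J. cnj (c j) * (cnj (e j n) * x n)) = (\<Sum>j\<in>J. cnj (c j) * P j M)"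
      unfolding P_def sum_distrib_left by (rule sum.swap)
    have d: "(\<Sum>n<M. \<Sum>j\<in>J. \<Sum>i\<in>J. cnj (c j) * c i * (cnj (e j n) * e i n))
        = (\<Sum>j\<in>J. \<Sum>i\<in>J. cnj (c j) * c i * G j i M)"
      unfolding G_def sum_distrib_left
      by (subst sum.swap) (intro sum.cong refl, rule sum.swap)
    show ?thesis unfolding pt sum.distrib sum_subtractf a b d A_def ..
  qed
  have PL: "(\<lambda>M. P j M) \<longlonglongrightarrow> c j" if "j \<in> J" for j
    unfolding P_def c_def hinner_def using l2_prod_summable[OF eJ[OF that] x] by (rule summable_LIMSEQ)
  have GL: "(\<lambda>M. G j i M) \<longlonglongrightarrow> (if j = i then 1 else 0)" if "j \<in> J" "i \<in> J" for j i
    unfolding G_def orth[OF that(2,1), symmetric] hinner_def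
    using l2_prod_summable[OF eJ[OF that(1)] eJ[OF that(2)]] by (rule summable_LIMSEQ)
  have AL: "(\<lambda>M. A M) \<longlonglongrightarrow> of_real ((hnorm x)\<^sup>2)"
  proof -
    have "(\<lambda>M. of_real (\<Sum>n<M. (cmod (x n))\<^sup>2) :: complex) \<longlonglongrightarrow> of_real (\<Sum>n. (cmod (x n))\<^sup>2)"
      using x unfolding l2H_def by (intro tendsto_of_real summable_LIMSEQ) auto
    moreover have "A M = of_real (\<Sum>n<M. (cmod (x n))\<^sup>2)" for M
    proof -
      have "cnj (x n) * x n = of_real ((cmod (x n))\<^sup>2)" for n
        by (metis complex_norm_square mult.commute)
      then show ?thesis unfolding A_def by simp
    qed
    ultimately show ?thesis using hnorm_sq[OF x] by simp
  qed
  have QL: "(\<lambda>M. \<Sum>n<M. cnj (y n) * y n) \<longlonglongrightarrow> of_real ((hnorm x)\<^sup>2) - (\<Sum>j\<in>J. c j * cnj (c j))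
      - (\<Sum>j\<in>J. cnj (c j) * c j) + (\<Sum>j\<in>J. \<Sum>i\<in>J. cnj (c j) * c i * (if j = i then 1 else 0))"
    unfolding Qeq
    by (intro tendsto_add tendsto_diff AL tendsto_sum tendsto_mult tendsto_const tendsto_cnj PL GL)
  have "(\<Sum>j\<in>J. \<Sum>i\<in>J. cnj (c j) * c i * (if j = i then 1 else 0)) = (\<Sum>j\<in>J. cnj (c j) * c j)"
    using J by (simp add: if_distrib cong: if_cong)
  moreover have "(\<Sum>j\<in>J. cnj (c j) * c j) = of_real (\<Sum>j\<in>J. (cmod (c j))\<^sup>2)"
    by (simp add: cnj_self)
  moreover have "(\<Sum>j\<in>J. c j * cnj (c j)) = of_real (\<Sum>j\<in>J. (cmod (c j))\<^sup>2)"
    by (simp add: self_cnj)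
  ultimately have QL': "(\<lambda>M. \<Sum>n<M. cnj (y n) * y n) \<longlonglongrightarrow> of_real ((hnorm x)\<^sup>2 - (\<Sum>j\<in>J. (cmod (c j))\<^sup>2))"
    using QL by simp
  have "(\<lambda>M. Re (\<Sum>n<M. cnj (y n) * y n)) \<longlonglongrightarrow> (hnorm x)\<^sup>2 - (\<Sum>j\<in>J. (cmod (c j))\<^sup>2)"
    using tendsto_Re[OF QL'] by simp
  moreover have "Re (\<Sum>n<M. cnj (y n) * y n) \<ge> 0" for M
    by (simp add: cnj_self sum_nonneg)
  ultimately have "0 \<le> (hnorm x)\<^sup>2 - (\<Sum>j\<in>J. (cmod (c j))\<^sup>2)"
    by (intro LIMSEQ_le_const) auto
  then show ?thesis by (simp add: c_def)
qed
lemma circle_space: "space circle_measure = sphere 0 1"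
  unfolding circle_measure_def by simp

lemma circle_prob: "prob_space circle_measure"
proof -
  have ps: "prob_space (uniform_measure lborel {0..<2*pi})"
    by (intro prob_space_uniform_measure) auto
  have "cis \<in> measurable (uniform_measure lborel {0..<2*pi}) (restrict_space borel (sphere (0::complex) 1))"
  proof (rule measurable_restrict_space2)
    show "cis \<in> space (uniform_measure lborel {0..<2 * pi}) \<rightarrow> sphere 0 1" by auto
    have "cis \<in> borel_measurable borel" by (intro borel_measurable_continuous_onI continuous_intros)
    then show "cis \<in> borel_measurable (uniform_measure lborel {0..<2 * pi})"
      by (simp cong: measurable_cong_sets)
  qed
  then show ?thesis unfolding circle_measure_def by (rule prob_space.prob_space_distr[OF ps])
qed

lemma delta_inner: "hinner (\<lambda>m. if m = n then 1 else 0) x = x n"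
proof -
  have "(\<lambda>m. cnj (if m = n then 1 else 0) * x m) = (\<lambda>m. if m = n then x m else 0)" by auto
  then show ?thesis unfolding hinner_def using sums_single[of n x] by (simp add: sums_iff)
qed

lemma delta_l2: "(\<lambda>m. if m = n then (1::complex) else 0) \<in> l2H"
proof -
  have "(\<lambda>m. (cmod (if m = n then (1::complex) else 0))\<^sup>2) = (\<lambda>m. if m = n then 1 else 0)" by auto
  then show ?thesis unfolding l2H_def using sums_single[of n "\<lambda>_. 1::real"] by (simp add: sums_iff)
qed

lemma hinner_scale_self:
  assumes "v \<in> l2H" "hinner v v = 1"
  shows "hinner (hscale c v) v = cnj c"
proof -
  have "hinner (hscale c v) v = (\<Sum>n. cnj c * (cnj (v n) * v n))"
    unfolding hinner_def hscale_def by (simp add: ac_simps)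
  also have "\<dots> = cnj c * hinner v v"
    unfolding hinner_def by (rule suminf_mult[OF l2_prod_summable[OF assms(1) assms(1)]])
  finally show ?thesis using assms by simp
qed

lemma sigma_integral:
  assumes R: "is_R_of E R" and eb: "is_eigenbasis R e \<sigma>" and j: "j \<ge> 1"
  shows "2 * (\<sigma> j)\<^sup>2 = (\<integral>l. (cmod (hinner (e j) (E l)))\<^sup>2 \<partial>circle_measure)"
proof -
  have ej: "e j \<in> l2H" "hinner (e j) (e j) = 1"
    "R (e j) = hscale (complex_of_real (2 * (\<sigma> j)\<^sup>2)) (e j)"
    using eb j unfolding is_eigenbasis_def by auto
  have "hinner (R (e j)) (e j) = complex_of_real (2 * (\<sigma> j)\<^sup>2)"
    unfolding ej(3) by (subst hinner_scale_self[OF ej(1,2)]) simp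
  moreover have "hinner (R (e j)) (e j) = (\<integral>l. hinner (e j) (E l) * cnj (hinner (e j) (E l)) \<partial>circle_measure)"
    using R ej(1) unfolding is_R_of_def by blast
  moreover have "\<dots> = complex_of_real (\<integral>l. (cmod (hinner (e j) (E l)))\<^sup>2 \<partial>circle_measure)"
    unfolding self_cnj by (rule integral_complex_of_real)
  ultimately have "complex_of_real (2 * (\<sigma> j)\<^sup>2) = complex_of_real (\<integral>l. (cmod (hinner (e j) (E l)))\<^sup>2 \<partial>circle_measure)"
    by metis
  then show ?thesis using of_real_eq_iff by blast
qed

lemma trace_N:
  assumes sf: "spanning_field T E" and R: "is_R_of E R" and eb: "is_eigenbasis R e \<sigma>"
  shows "(\<Sum>j\<in>{1..N}. 2 * (\<sigma> j)\<^sup>2) \<le> E_L2norm_sq E"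
proof -
  interpret prob_space circle_measure by (rule circle_prob)
  have El: "\<And>l. l \<in> space circle_measure \<Longrightarrow> E l \<in> l2H"
    using sf unfolding spanning_field_def circle_space by blast
  obtain M where M: "\<And>l. l \<in> space circle_measure \<Longrightarrow> hnorm (E l) \<le> M"
    using sf unfolding spanning_field_def circle_space by blast
  have meas: "\<And>x. x \<in> l2H \<Longrightarrow> (\<lambda>l. hinner x (E l)) \<in> borel_measurable circle_measure"
    using sf unfolding spanning_field_def by blast
  have ej: "\<And>j. j \<ge> 1 \<Longrightarrow> e j \<in> l2H"
    and orth: "\<And>j i. j \<ge> 1 \<Longrightarrow> i \<ge> 1 \<Longrightarrow> hinner (e j) (e i) = (if j = i then 1 else 0)"
    using eb unfolding is_eigenbasis_def by auto
  have hn0: "hnorm x \<ge> 0" if "x \<in> l2H" for x using that unfolding hnorm_def l2H_def by (simp add: suminf_nonneg)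
  have Mb: "(hnorm (E l))\<^sup>2 \<le> M\<^sup>2" if "l \<in> space circle_measure" for l
    using M[OF that] hn0[OF El[OF that]] by (intro power_mono) auto
  have bes: "(\<Sum>j\<in>J. (cmod (hinner (e j) (E l)))\<^sup>2) \<le> (hnorm (E l))\<^sup>2"
    if "l \<in> space circle_measure" "finite J" "J \<subseteq> {1..}" for l J
    using that by (intro bessel El ej orth) auto
  have intj: "integrable circle_measure (\<lambda>l. (cmod (hinner (e j) (E l)))\<^sup>2)" if "j \<ge> 1" for j
  proof (rule integrable_const_bound[where B="M\<^sup>2"])
    show "AE l in circle_measure. norm ((cmod (hinner (e j) (E l)))\<^sup>2) \<le> M\<^sup>2"
    proof (rule AE_I2)
      fix l assume l: "l \<in> space circle_measure"
      have "(cmod (hinner (e j) (E l)))\<^sup>2 \<le> (hnorm (E l))\<^sup>2"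
        using bes[OF l, of "{j}"] that by simp
      then show "norm ((cmod (hinner (e j) (E l)))\<^sup>2) \<le> M\<^sup>2" using Mb[OF l] by simp
    qed
    show "(\<lambda>l. (cmod (hinner (e j) (E l)))\<^sup>2) \<in> borel_measurable circle_measure"
      using meas[OF ej[OF that]] by measurable
  qed
  have gmeas: "(\<lambda>l. \<Sum>n. (cmod (E l n))\<^sup>2) \<in> borel_measurable circle_measure"
  proof (rule borel_measurable_suminf)
    fix n
    have "(\<lambda>l. hinner (\<lambda>m. if m = n then 1 else 0) (E l)) \<in> borel_measurable circle_measure"
      by (rule meas[OF delta_l2])
    then have "(\<lambda>l. E l n) \<in> borel_measurable circle_measure" by (simp add: delta_inner)
    then show "(\<lambda>l. (cmod (E l n))\<^sup>2) \<in> borel_measurable circle_measure" by measurable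
  qed
  have hmeas: "(\<lambda>l. (hnorm (E l))\<^sup>2) \<in> borel_measurable circle_measure"
    using gmeas by (rule measurable_cong[THEN iffD1, rotated]) (simp add: hnorm_sq El)
  have inth: "integrable circle_measure (\<lambda>l. (hnorm (E l))\<^sup>2)"
    by (rule integrable_const_bound[where B="M\<^sup>2"]) (use Mb hmeas in \<open>auto intro!: AE_I2\<close>)
  have "(\<Sum>j\<in>{1..N}. 2 * (\<sigma> j)\<^sup>2) = (\<Sum>j\<in>{1..N}. \<integral>l. (cmod (hinner (e j) (E l)))\<^sup>2 \<partial>circle_measure)"
    by (intro sum.cong refl sigma_integral[OF R eb]) auto
  also have "\<dots> = (\<integral>l. (\<Sum>j\<in>{1..N}. (cmod (hinner (e j) (E l)))\<^sup>2) \<partial>circle_measure)"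
    by (rule Bochner_Integration.integral_sum[where f="\<lambda>j l. (cmod (hinner (e j) (E l)))\<^sup>2", symmetric]) (auto intro: intj)
  also have "\<dots> \<le> (\<integral>l. (hnorm (E l))\<^sup>2 \<partial>circle_measure)"
    by (rule integral_mono'[OF inth]) (auto intro: bes)
  finally show ?thesis unfolding E_L2norm_sq_def .
qed

lemma trace_S:
  assumes sf: "spanning_field T E" and R: "is_R_of E R" and eb: "is_eigenbasis R e \<sigma>"
    and S: "finite S" "0 \<notin> S"
  shows "(\<Sum>i\<in>S. (sigZ \<sigma> i)\<^sup>2) \<le> E_L2norm_sq E"
proof -
  define N where "N = Max (insert 0 ((\<lambda>i. nat \<bar>i\<bar>) ` S))"
  define Z where "Z = int ` {1..N} \<union> (\<lambda>j. - int j) ` {1..N}"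
  have SZ: "S \<subseteq> Z"
  proof
    fix i assume i: "i \<in> S"
    then have "nat \<bar>i\<bar> \<le> N" unfolding N_def using S by (intro Max_ge) auto
    moreover have "i \<noteq> 0" using i S by auto
    ultimately show "i \<in> Z" unfolding Z_def
      by (cases "i > 0") (auto simp: image_iff intro!: bexI[of _ "nat \<bar>i\<bar>"])
  qed
  have "(\<Sum>i\<in>S. (sigZ \<sigma> i)\<^sup>2) \<le> (\<Sum>i\<in>Z. (sigZ \<sigma> i)\<^sup>2)"
    by (intro sum_mono2 SZ) (auto simp: Z_def)
  also have "\<dots> = (\<Sum>i\<in>int ` {1..N}. (sigZ \<sigma> i)\<^sup>2) + (\<Sum>i\<in>(\<lambda>j. - int j) ` {1..N}. (sigZ \<sigma> i)\<^sup>2)"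
    unfolding Z_def by (rule sum.union_disjoint) auto
  also have "\<dots> = (\<Sum>j\<in>{1..N}. 2 * (\<sigma> j)\<^sup>2)"
    by (subst sum.reindex, simp add: inj_on_def)+ (simp add: sigZ_def sum.distrib[symmetric])
  also have "\<dots> \<le> E_L2norm_sq E" by (rule trace_N[OF sf R eb])
  finally show ?thesis .
qed

theorem corollary5p13:
  fixes T :: "hvec \<Rightarrow> hvec" and E :: "complex \<Rightarrow> hvec" and R :: "hvec \<Rightarrow> hvec"
    and e :: "nat \<Rightarrow> hvec" and \<sigma> :: "nat \<Rightarrow> real" and m :: "hvec measure"
    and f :: "hvec \<Rightarrow> real" and k :: nat
  assumes "bounded_op T"
    and "spanning_field T E"
    and "is_R_of E R"
    and "is_eigenbasis R e \<sigma>"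
    and "gaussian_cov m R"
    and "f \<in> L2R m"
    and "k > 0"
    and "Bbounded (alpha m e \<sigma> f k) k"
  shows "(\<lambda>is. (alpha m e \<sigma> f k is)\<^sup>2 * (\<Prod>j<k-1. (sigZ \<sigma> (is ! j))\<^sup>2)) summable_on Zstar_tuples k
    \<and> (\<Sum>\<^sub>\<infinity>is\<in>Zstar_tuples k. (alpha m e \<sigma> f k is)\<^sup>2 * (\<Prod>j<k-1. (sigZ \<sigma> (is ! j))\<^sup>2))
        \<le> (Bnorm (alpha m e \<sigma> f k) k)\<^sup>2 * (E_L2norm_sq E) ^ (k - 1)"
proof -
  obtain n where k: "k = Suc n" using assms(7) by (cases k) auto
  have "(\<lambda>is. (alpha m e \<sigma> f k is)\<^sup>2 * (\<Prod>j<n. (\<lambda>i. (sigZ \<sigma> i)\<^sup>2) (is!j))) summable_on Zstar_tuples k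
    \<and> (\<Sum>\<^sub>\<infinity>is\<in>Zstar_tuples k. (alpha m e \<sigma> f k is)\<^sup>2 * (\<Prod>j<n. (\<lambda>i. (sigZ \<sigma> i)\<^sup>2) (is!j)))
        \<le> (Bnorm (alpha m e \<sigma> f k) k)\<^sup>2 * (E_L2norm_sq E) ^ n"
  proof (rule main_abstract)
    show "\<And>p S. length p = n \<Longrightarrow> 0 \<notin> set p \<Longrightarrow> finite S \<Longrightarrow> 0 \<notin> S \<Longrightarrow>
        (\<Sum>i\<in>S. (alpha m e \<sigma> f k (p@[i]))\<^sup>2) \<le> (Bnorm (alpha m e \<sigma> f k) k)\<^sup>2"
      using row_bound assms(8) unfolding k by blast
    show "\<And>S. finite S \<Longrightarrow> 0 \<notin> S \<Longrightarrow> (\<Sum>i\<in>S. (sigZ \<sigma> i)\<^sup>2) \<le> E_L2norm_sq E"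
      using trace_S assms(2,3,4) by blast
  qed (auto simp: Zstar_tuples_def k)
  then show ?thesis using k by simp
qed

end
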